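(* Let $A$ be a deterministic KAT automaton over $(\Sigma,T_0)$ and $\mathfrak{t}:T_0\to\mathsf{BA}(T_1)$. If $\mathsf{compose}_{\mathfrak{t}}(A)$ is $k$-dense, then so is $A$.
   Context: Atoms $\mathsf{At}_T=2^T$; $\mathsf{BA}(T)$ Boolean expressions over $T$; $\beta\le b$ means $b$ holds under the assignment making exactly the tests in $\beta$ true. Deterministic KAT automaton over $(\Sigma,T)$: $A=(Q,\delta,\iota)$, $Q$ finite, $\delta:Q\times\mathsf{At}_T\to\{\mathsf{accept},\mathsf{reject}\}+\Sigma\times Q$, $\iota:\mathsf{At}_T\to\{\mathsf{accept},\mathsf{reject}\}+\Sigma\times Q$. Write $q\xrightarrow{\alpha\mid p}_Aq'$ for $\delta(q,\alpha)=(p,q')$; $q$ accepts $\alpha$ if $\delta(q,\alpha)=\mathsf{accept}$. $\mathsf{compose}_{\mathfrak{t}}(A)$: for $\beta\in\mathsf{At}_{T_1}$ let $\mathfrak{t}^{-1}(\beta)\in\mathsf{At}_{T_0}$ be the atom with $t\in\mathfrak{t}^{-1}(\beta)$ iff $\beta\le\mathfrak{t}(t)$; $\mathsf{compose}_{\mathfrak{t}}(A)=(Q,\delta',\iota')$ over $(\Sigma,T_1)$ with $\delta'(q,\beta)=\delta(q,\mathfrak{t}^{-1}(\beta))$, $\iota'(\beta)=\iota(\mathfrak{t}^{-1}(\beta))$. An automaton $(Q,\delta,\iota)$ over $(\Sigma,T)$ is $k$-dense if there exist non-empty subsets $S_1,\dots,S_k\subseteq Q$, distinct atoms $\alpha_1,\dots,\alpha_k\in\mathsf{At}_T$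 and, for all $1\le i,j\le k$ and $q\in S_i$, an action $p_{qj}\in\Sigma$, such that for all $i,j,m\le k$: (1) if $q\in S_i$ then $q$ accepts $\alpha_i$; (2) if $i\ne j$ and $q\in S_i$, there is $q'\in S_j$ with $q\xrightarrow{\alpha_j\mid p_{qj}}q'$; (3) if $q\in S_i$ and $q'\in S_j$ with $p_{qm}=p_{q'm}$, then $i=j$. *)

theory Defs
  imports Main
begin

datatype 't bexp = BFalse | BTrue | BTest 't | BNot "'t bexp"
  | BAnd "'t bexp" "'t bexp" | BOr "'t bexp" "'t bexp"

fun bvars :: "'t bexp \<Rightarrow> 't set" where
  "bvars BFalse = {}" | "bvars BTrue = {}" | "bvars (BTest t) = {t}"
| "bvars (BNot b) = bvars b"
| "bvars (BAnd b c) = bvars b \<union> bvars c" | "bvars (BOr b c) = bvars b \<union> bvars c"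

definition BA :: "'t set \<Rightarrow> 't bexp set" where
  "BA T = {b. bvars b \<subseteq> T}"

text \<open>Atoms of T: subsets of T (the tests that are true).\<close>
definition atoms :: "'t set \<Rightarrow> 't set set" where
  "atoms T = Pow T"

text \<open>beta \<le> b : b holds under the assignment making exactly the tests in beta true.\<close>
fun sat :: "'t set \<Rightarrow> 't bexp \<Rightarrow> bool" where
  "sat \<beta> BFalse = False" | "sat \<beta> BTrue = True" | "sat \<beta> (BTest t) = (t \<in> \<beta>)"
| "sat \<beta> (BNot b) = (\<not> sat \<beta> b)"
| "sat \<beta> (BAnd b c) = (sat \<beta> b \<and> sat \<beta> c)"
| "sat \<beta> (BOr b c) = (sat \<beta> b \<or> sat \<beta> c)"

datatype ('p, 'q) out = Accept | Reject | Step 'p 'q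

type_synonym ('q, 't, 'p) kat_aut =
  "'q set \<times> ('q \<Rightarrow> 't set \<Rightarrow> ('p, 'q) out) \<times> ('t set \<Rightarrow> ('p, 'q) out)"

definition outs :: "'p set \<Rightarrow> 'q set \<Rightarrow> ('p, 'q) out set" where
  "outs \<Sigma> Q = {Accept, Reject} \<union> {Step p q | p q. p \<in> \<Sigma> \<and> q \<in> Q}"

definition kat_automaton :: "'p set \<Rightarrow> 't set \<Rightarrow> ('q, 't, 'p) kat_aut \<Rightarrow> bool" where
  "kat_automaton \<Sigma> T A = (case A of (Q, \<delta>, \<iota>) \<Rightarrow>
     finite Q \<and> finite T \<and>
     (\<forall>q\<in>Q. \<forall>\<alpha>\<in>atoms T. \<delta> q \<alpha> \<in> outs \<Sigma> Q) \<and>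
     (\<forall>\<alpha>\<in>atoms T. \<iota> \<alpha> \<in> outs \<Sigma> Q))"

definition tinv :: "'t0 set \<Rightarrow> ('t0 \<Rightarrow> 't1 bexp) \<Rightarrow> 't1 set \<Rightarrow> 't0 set" where
  "tinv T0 tr \<beta> = {t \<in> T0. sat \<beta> (tr t)}"

definition compose :: "'t0 set \<Rightarrow> ('t0 \<Rightarrow> 't1 bexp) \<Rightarrow> ('q, 't0, 'p) kat_aut \<Rightarrow> ('q, 't1, 'p) kat_aut" where
  "compose T0 tr A = (case A of (Q, \<delta>, \<iota>) \<Rightarrow>
     (Q, (\<lambda>q \<beta>. \<delta> q (tinv T0 tr \<beta>)), (\<lambda>\<beta>. \<iota> (tinv T0 tr \<beta>))))"

definition k_dense :: "'p set \<Rightarrow> 't set \<Rightarrow> ('q, 't, 'p) kat_aut \<Rightarrow> nat \<Rightarrow> bool" where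
  "k_dense \<Sigma> T A k = (case A of (Q, \<delta>, \<iota>) \<Rightarrow>
     (\<exists>(S :: nat \<Rightarrow> 'q set) (\<alpha> :: nat \<Rightarrow> 't set) (p :: 'q \<Rightarrow> nat \<Rightarrow> 'p).
        (\<forall>i\<in>{1..k}. S i \<noteq> {} \<and> S i \<subseteq> Q \<and> \<alpha> i \<in> atoms T) \<and>
        inj_on \<alpha> {1..k} \<and>
        (\<forall>i\<in>{1..k}. \<forall>j\<in>{1..k}. \<forall>q\<in>S i. p q j \<in> \<Sigma>) \<and>
        (\<forall>i\<in>{1..k}. \<forall>q\<in>S i. \<delta> q (\<alpha> i) = Accept) \<and>
        (\<forall>i\<in>{1..k}. \<forall>j\<in>{1..k}. i \<noteq> j \<longrightarrow>
            (\<forall>q\<in>S i. \<exists>q'\<in>S j. \<delta> q (\<alpha> j) = Step (p q j) q')) \<and>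
        (\<forall>i\<in>{1..k}. \<forall>j\<in>{1..k}. \<forall>m\<in>{1..k}. \<forall>q\<in>S i. \<forall>q'\<in>S j.
            p q m = p q' m \<longrightarrow> i = j)))"

end

theory Submission
  imports Defs
begin

theorem lemma6p19:
  fixes \<Sigma> :: "'p set" and T0 :: "'t0 set" and T1 :: "'t1 set"
    and A :: "('q, 't0, 'p) kat_aut" and tr :: "'t0 \<Rightarrow> 't1 bexp" and k :: nat
  assumes "kat_automaton \<Sigma> T0 A"
    and "finite T1"
    and "\<forall>t\<in>T0. tr t \<in> BA T1"
    and "k_dense \<Sigma> T1 (compose T0 tr A) k"
  shows "k_dense \<Sigma> T0 A k"
proof -
  obtain Q \<delta> \<iota> where A: "A = (Q, \<delta>, \<iota>)" by (cases A) auto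
  have "\<exists>S \<alpha> p. (\<forall>i\<in>{1..k}. S i \<noteq> {} \<and> S i \<subseteq> Q \<and> \<alpha> i \<in> atoms T1) \<and>
        inj_on \<alpha> {1..k} \<and>
        (\<forall>i\<in>{1..k}. \<forall>j\<in>{1..k}. \<forall>q\<in>S i. p q j \<in> \<Sigma>) \<and>
        (\<forall>i\<in>{1..k}. \<forall>q\<in>S i. \<delta> q (tinv T0 tr (\<alpha> i)) = Accept) \<and>
        (\<forall>i\<in>{1..k}. \<forall>j\<in>{1..k}. i \<noteq> j \<longrightarrow>
            (\<forall>q\<in>S i. \<exists>q'\<in>S j. \<delta> q (tinv T0 tr (\<alpha> j)) = Step (p q j) q')) \<and>
        (\<forall>i\<in>{1..k}. \<forall>j\<in>{1..k}. \<forall>m\<in>{1..k}. \<forall>q\<in>S i. \<forall>q'\<in>S j.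
            p q m = p q' m \<longrightarrow> i = j)"
    using assms(4) unfolding A compose_def k_dense_def prod.case .
  then obtain S \<alpha> p where
    h1: "\<forall>i\<in>{1..k}. S i \<noteq> {} \<and> S i \<subseteq> Q \<and> \<alpha> i \<in> atoms T1" and
    h2: "inj_on \<alpha> {1..k}" and
    h3: "\<forall>i\<in>{1..k}. \<forall>j\<in>{1..k}. \<forall>q\<in>S i. p q j \<in> \<Sigma>" and
    h4: "\<forall>i\<in>{1..k}. \<forall>q\<in>S i. \<delta> q (tinv T0 tr (\<alpha> i)) = Accept" and
    h5: "\<forall>i\<in>{1..k}. \<forall>j\<in>{1..k}. i \<noteq> j \<longrightarrow>
            (\<forall>q\<in>S i. \<exists>q'\<in>S j. \<delta> q (tinv T0 tr (\<alpha> j)) = Step (p q j) q')" and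
    h6: "\<forall>i\<in>{1..k}. \<forall>j\<in>{1..k}. \<forall>m\<in>{1..k}. \<forall>q\<in>S i. \<forall>q'\<in>S j.
            p q m = p q' m \<longrightarrow> i = j"
    by (elim exE conjE) (rule that)
  have inj: "inj_on (\<lambda>i. tinv T0 tr (\<alpha> i)) {1..k}"
  proof (rule inj_onI, rule ccontr)
    fix i j assume i: "i \<in> {1..k}" and j: "j \<in> {1..k}"
      and eq: "tinv T0 tr (\<alpha> i) = tinv T0 tr (\<alpha> j)" and ne: "i \<noteq> j"
    from h1 i have "S i \<noteq> {}" by blast
    then obtain q where q: "q \<in> S i" by blast
    from h5 i j ne q obtain q' where "\<delta> q (tinv T0 tr (\<alpha> j)) = Step (p q j) q'" by blast
    moreover from h4 i q have "\<delta> q (tinv T0 tr (\<alpha> i)) = Accept" by blast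
    ultimately show False using eq by simp
  qed
  have at: "\<forall>i\<in>{1..k}. tinv T0 tr (\<alpha> i) \<in> atoms T0"
    by (auto simp: tinv_def atoms_def)
  show ?thesis
    unfolding A k_dense_def prod.case
    apply (rule exI[of _ S], rule exI[of _ "\<lambda>i. tinv T0 tr (\<alpha> i)"], rule exI[of _ p])
    apply (intro conjI)
    using h1 at apply blast
    using inj apply assumption
    using h3 apply assumption
    using h4 apply assumption
    using h5 apply assumption
    using h6 apply assumption
    done
qed

end
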